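(* Assume that $\wp(\phi):=\int_0^\phi g(s)\,ds\to\infty$ as $\phi\to\infty$. Then there is a constant $c$ depending only on the initial data and on $\kappa$ such that every solution satisfies $\|\phi\|_{L^\infty}\le c$.
   Context: $(M,\mathbf{g},\phi)$ is an asymptotically flat solution of the $2+1$ equivariant Einstein-wave map system ($\kappa>0$, target $d\rho^2+g(\rho)^2d\theta^2$, $g$ smooth odd with $g'(0)=1$, $\phi=\rho\circ\Phi\ge0$ with $\phi=0$ on the axis), written in coordinates $(t,r,\theta)$, $-1\le t<0$, with $\mathbf{g}=-e^{2\alpha}dt^2+e^{2\beta}dr^2+r^2d\theta^2$, $\alpha=\beta=0$ on the axis, and with conserved finite energy $E=2\pi\int_0^\infty\tfrac12(e^{-2\alpha}\phi_t^2+e^{-2\beta}\phi_r^2+g(\phi)^2/r^2)\,re^\beta dr$; $\beta$ is bounded above and below by constants depending only on the initial data. *)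

theory Defs
  imports "HOL-Analysis.Analysis"
begin

definition pt :: "(real \<Rightarrow> real \<Rightarrow> real) \<Rightarrow> real \<Rightarrow> real \<Rightarrow> real" where
  "pt f t r = deriv (\<lambda>s. f s r) t"

definition pr :: "(real \<Rightarrow> real \<Rightarrow> real) \<Rightarrow> real \<Rightarrow> real \<Rightarrow> real" where
  "pr f t r = deriv (\<lambda>s. f t s) r"

text \<open>Warping function g of the target d rho^2 + g(rho)^2 d theta^2: smooth, odd, g'(0) = 1.\<close>

definition target_warp :: "(real \<Rightarrow> real) \<Rightarrow> bool" where
  "target_warp g \<longleftrightarrow>
     (\<forall>k x. ((deriv ^^ k) g) differentiable (at x)) \<and>
     (\<forall>x. g (- x) = - g x) \<and> deriv g 0 = 1"

definition wp :: "(real \<Rightarrow> real) \<Rightarrow> real \<Rightarrow> real" where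
  "wp g x = integral {0..x} g"

definition energy_density ::
  "(real \<Rightarrow> real) \<Rightarrow> (real \<Rightarrow> real \<Rightarrow> real) \<Rightarrow> (real \<Rightarrow> real \<Rightarrow> real) \<Rightarrow>
   (real \<Rightarrow> real \<Rightarrow> real) \<Rightarrow> real \<Rightarrow> real \<Rightarrow> real" where
  "energy_density g \<alpha> \<beta> \<phi> t r =
     (1/2) * (exp (-2 * \<alpha> t r) * (pt \<phi> t r)^2 + exp (-2 * \<beta> t r) * (pr \<phi> t r)^2
              + (g (\<phi> t r))^2 / r^2) * r * exp (\<beta> t r)"

definition energy ::
  "(real \<Rightarrow> real) \<Rightarrow> (real \<Rightarrow> real \<Rightarrow> real) \<Rightarrow> (real \<Rightarrow> real \<Rightarrow> real) \<Rightarrow>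
   (real \<Rightarrow> real \<Rightarrow> real) \<Rightarrow> real \<Rightarrow> real" where
  "energy g \<alpha> \<beta> \<phi> t = 2 * pi * integral {0<..} (energy_density g \<alpha> \<beta> \<phi> t)"

text \<open>Solutions on the slab -1 <= t < 0 of the 2+1 equivariant Einstein-wave map system with
 metric -e^{2 alpha} dt^2 + e^{2 beta} dr^2 + r^2 d theta^2, written as the Einstein equations
 G = kappa T (tt, rr, tr components) and the wave map equation, together with the standing
 assumptions: regularity at the axis, alpha = beta = phi = 0 on the axis, phi >= 0, beta bounded,
 finite conserved energy.\<close>

definition EWM_solution ::
  "real \<Rightarrow> (real \<Rightarrow> real) \<Rightarrow> (real \<Rightarrow> real \<Rightarrow> real) \<Rightarrow> (real \<Rightarrow> real \<Rightarrow> real) \<Rightarrow>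
   (real \<Rightarrow> real \<Rightarrow> real) \<Rightarrow> bool" where
  "EWM_solution \<kappa> g \<alpha> \<beta> \<phi> \<longleftrightarrow>
     (\<forall>t\<in>{-1..<0}. \<forall>r>0.
        (\<lambda>s. \<phi> s r) differentiable (at t) \<and> (\<lambda>s. \<alpha> s r) differentiable (at t) \<and>
        (\<lambda>s. \<beta> s r) differentiable (at t) \<and>
        (\<lambda>s. \<phi> t s) differentiable (at r) \<and> (\<lambda>s. \<alpha> t s) differentiable (at r) \<and>
        (\<lambda>s. \<beta> t s) differentiable (at r) \<and>
        (\<lambda>s. exp (\<beta> s r - \<alpha> s r) * pt \<phi> s r) differentiable (at t) \<and>
        (\<lambda>s. s * exp (\<alpha> t s - \<beta> t s) * pr \<phi> t s) differentiable (at r) \<and>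
        pr \<beta> t r = \<kappa> * r / 2 * exp (2 * \<beta> t r) *
          (exp (-2 * \<alpha> t r) * (pt \<phi> t r)^2 + exp (-2 * \<beta> t r) * (pr \<phi> t r)^2
           + (g (\<phi> t r))^2 / r^2) \<and>
        pr \<alpha> t r = \<kappa> * r / 2 * exp (2 * \<beta> t r) *
          (exp (-2 * \<alpha> t r) * (pt \<phi> t r)^2 + exp (-2 * \<beta> t r) * (pr \<phi> t r)^2
           - (g (\<phi> t r))^2 / r^2) \<and>
        pt \<beta> t r = \<kappa> * r * pt \<phi> t r * pr \<phi> t r \<and>
        - pt (\<lambda>s q. exp (\<beta> s q - \<alpha> s q) * pt \<phi> s q) t r
          + (1 / r) * pr (\<lambda>s q. q * exp (\<alpha> s q - \<beta> s q) * pr \<phi> s q) t r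
          = exp (\<alpha> t r + \<beta> t r) * g (\<phi> t r) * deriv g (\<phi> t r) / r^2) \<and>
     (\<forall>t\<in>{-1..<0}.
        continuous_on {0..} (\<phi> t) \<and> continuous_on {0..} (\<alpha> t) \<and>
        continuous_on {0..} (\<beta> t) \<and>
        \<phi> t 0 = 0 \<and> \<alpha> t 0 = 0 \<and> \<beta> t 0 = 0 \<and> (\<forall>r\<ge>0. \<phi> t r \<ge> 0)) \<and>
     (\<exists>B. \<forall>t\<in>{-1..<0}. \<forall>r\<ge>0. \<bar>\<beta> t r\<bar> \<le> B) \<and>
     (\<forall>t\<in>{-1..<0}. energy_density g \<alpha> \<beta> \<phi> t integrable_on {0<..} \<and>
        energy g \<alpha> \<beta> \<phi> t = energy g \<alpha> \<beta> \<phi> (-1))"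

end

theory Submission
  imports Defs
begin
lemma wp_deriv:
  assumes cg: "continuous_on UNIV g" and x: "x \<ge> 0"
  shows "(wp g has_real_derivative g x) (at x within {0..})"
proof -
  have "(wp g has_real_derivative g x) (at x within {0..x+1})"
    unfolding wp_def[abs_def] using x
    by (intro integral_has_real_derivative continuous_on_subset[OF cg]) auto
  moreover have "at x within {0..x+1} = at x within {0..}"
    by (rule at_within_nhd[of _ "{x-1<..<x+1}"]) auto
  ultimately show ?thesis by simp
qed

lemma amgm:
  fixes s u A P G :: real
  assumes s: "s > 0" and u: "u > 0" and A: "A \<ge> 0"
  shows "G * P \<le> s / 2 * (1/u) * (A + u^2 * P^2 + G^2 / s^2)"
proof -
  have "0 \<le> (s * u * P - G)^2 / (2 * s * u)" using s u by simp
  also have "(s * u * P - G)^2 / (2 * s * u) = s/2*(1/u)*(u^2*P^2 + G^2/s^2) - G*P"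
    using s u by (simp add: field_simps power2_eq_square)
  finally have "G*P \<le> s/2*(1/u)*(u^2*P^2 + G^2/s^2)" by simp
  also have "\<dots> \<le> s / 2 * (1/u) * (A + u^2 * P^2 + G^2 / s^2)"
    using s u A by (intro mult_left_mono) auto
  finally show ?thesis .
qed

lemma alg:
  fixes e k s X :: real
  assumes "e > 0" "k > 0"
  shows "e * (k * s / 2 * (1 / e)^2 * X) / k = s / 2 * (1 / e) * X"
  using assms by (simp add: power2_eq_square)

lemma key:
  assumes k: "\<kappa> > 0" and cg: "continuous_on UNIV g"
    and sol: "EWM_solution \<kappa> g \<alpha> \<beta> \<phi>" and t: "t \<in> {-1..<0}" and r: "r \<ge> 0"
  shows "wp g (\<phi> t r) \<le> 1 / \<kappa>"
proof -
  define h where "h s = (1 - exp (- \<beta> t s)) / \<kappa> - wp g (\<phi> t s)" for s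
  have E1: "\<And>s. s > 0 \<Longrightarrow> (\<lambda>q. \<phi> t q) differentiable (at s) \<and> (\<lambda>q. \<beta> t q) differentiable (at s) \<and>
        pr \<beta> t s = \<kappa> * s / 2 * exp (2 * \<beta> t s) *
          (exp (-2 * \<alpha> t s) * (pt \<phi> t s)^2 + exp (-2 * \<beta> t s) * (pr \<phi> t s)^2
           + (g (\<phi> t s))^2 / s^2)"
    using sol t unfolding EWM_solution_def by blast
  have E2: "continuous_on {0..} (\<phi> t)" "continuous_on {0..} (\<beta> t)" "\<phi> t 0 = 0" "\<beta> t 0 = 0"
     "\<And>s. s \<ge> 0 \<Longrightarrow> \<phi> t s \<ge> 0"
    using sol t unfolding EWM_solution_def by blast+
  have wpc: "continuous_on {0..} (wp g)"
    using wp_deriv[OF cg] by (metis atLeast_iff continuous_on_eq_continuous_within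
        DERIV_continuous)
  have hc: "continuous_on {0..r} h"
  proof -
    have c1: "continuous_on {0..r} (\<lambda>x. \<beta> t x)" using E2(2) by (rule continuous_on_subset) auto
    have c2: "continuous_on {0..r} (\<lambda>x. wp g (\<phi> t x))"
      by (rule continuous_on_compose2[OF wpc continuous_on_subset[OF E2(1)]])
        (use E2(5) in \<open>auto simp: image_subset_iff\<close>)
    have "continuous_on {0..r} (\<lambda>x. (1 - exp (- \<beta> t x)) / \<kappa> - wp g (\<phi> t x))"
      by (intro continuous_on_diff continuous_on_divide continuous_on_const
          continuous_on_exp continuous_on_minus c1 c2) (use k in auto)
    then show ?thesis unfolding h_def[abs_def] .
  qed
  have hd: "\<exists>y. DERIV h s :> y \<and> y \<ge> 0" if s: "0 < s" "s < r" for s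
  proof -
    note e = E1[OF s(1)]
    have db: "(\<beta> t has_real_derivative pr \<beta> t s) (at s)"
      unfolding pr_def using e by (simp add: DERIV_deriv_iff_real_differentiable)
    have dp: "(\<phi> t has_real_derivative pr \<phi> t s) (at s)"
      unfolding pr_def using e by (simp add: DERIV_deriv_iff_real_differentiable)
    have eq: "pr \<beta> t s = \<kappa> * s / 2 * exp (2 * \<beta> t s) *
          (exp (-2 * \<alpha> t s) * (pt \<phi> t s)^2 + exp (-2 * \<beta> t s) * (pr \<phi> t s)^2
           + (g (\<phi> t s))^2 / s^2)"
      using e by blast
    have "(wp g \<circ> \<phi> t has_real_derivative g (\<phi> t s) * pr \<phi> t s) (at s within {0<..})"
    proof -
      have A: "(wp g has_real_derivative g (\<phi> t s)) (at (\<phi> t s) within \<phi> t ` {0<..})"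
      proof (rule has_field_derivative_subset[OF wp_deriv[OF cg E2(5)]])
        show "0 \<le> s" using s by simp
        show "\<phi> t ` {0<..} \<subseteq> {0..}" using E2(5) by (auto simp: image_subset_iff)
      qed
      have B: "(\<phi> t has_real_derivative pr \<phi> t s) (at s within {0<..})"
        using dp by (rule has_field_derivative_at_within)
      show ?thesis using DERIV_image_chain[OF A B] .
    qed
    hence dw: "((\<lambda>q. wp g (\<phi> t q)) has_real_derivative g (\<phi> t s) * pr \<phi> t s) (at s)"
      using s by (simp add: o_def at_within_open[of s "{0<..}"])
    have d1: "DERIV (\<lambda>x. exp (- \<beta> t x)) s :> exp (- \<beta> t s) * - pr \<beta> t s"
      by (rule DERIV_chain2[OF DERIV_exp DERIV_minus[OF db]])
    have d3: "DERIV (\<lambda>x. (1 - exp (- \<beta> t x)) / \<kappa> - wp g (\<phi> t x)) s :>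
       (0 - exp (- \<beta> t s) * - pr \<beta> t s) / \<kappa> - g (\<phi> t s) * pr \<phi> t s"
      by (rule DERIV_diff[OF DERIV_cdivide[OF DERIV_diff[OF DERIV_const d1]] dw])
    have "DERIV h s :> (exp (- \<beta> t s) * pr \<beta> t s) / \<kappa> - g (\<phi> t s) * pr \<phi> t s"
      unfolding h_def[abs_def] by (rule DERIV_cong[OF d3]) simp
    moreover have "g (\<phi> t s) * pr \<phi> t s \<le> (exp (- \<beta> t s) * pr \<beta> t s) / \<kappa>"
    proof -
      have ee: "exp (2 * \<beta> t s) = (1 / exp (- \<beta> t s))^2" "exp (-2 * \<beta> t s) = (exp (- \<beta> t s))^2"
        by (simp_all add: exp_minus power2_eq_square exp_add[symmetric] inverse_eq_divide)
      have "(exp (- \<beta> t s) * pr \<beta> t s) / \<kappa> = s / 2 * (1 / exp (- \<beta> t s)) *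
           (exp (-2 * \<alpha> t s) * (pt \<phi> t s)^2 + (exp (- \<beta> t s))^2 * (pr \<phi> t s)^2
           + (g (\<phi> t s))^2 / s^2)"
        unfolding eq ee using k by (intro alg) auto
      moreover have "g (\<phi> t s) * pr \<phi> t s \<le> \<dots>"
        by (rule amgm) (use s in auto)
      ultimately show ?thesis by simp
    qed
    ultimately show ?thesis by auto
  qed
  have "h 0 \<le> h r" by (rule DERIV_nonneg_imp_increasing_open[OF r hd hc]) auto
  moreover have "h 0 = 0" using E2 by (simp add: h_def wp_def)
  moreover have "(1 - exp (- \<beta> t r)) / \<kappa> \<le> 1 / \<kappa>" using k by (simp add: divide_right_mono)
  ultimately show ?thesis unfolding h_def by simp
qed

theorem mainTheorem7:
  fixes \<kappa> :: real and g :: "real \<Rightarrow> real" and \<phi>0 \<phi>1 :: "real \<Rightarrow> real"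
  assumes "\<kappa> > 0" and "target_warp g" and "filterlim (wp g) at_top at_top"
  shows "\<exists>c. \<forall>\<alpha> \<beta> \<phi>.
           EWM_solution \<kappa> g \<alpha> \<beta> \<phi> \<and> (\<forall>r\<ge>0. \<phi> (-1) r = \<phi>0 r) \<and>
           (\<forall>r>0. pt \<phi> (-1) r = \<phi>1 r)
           \<longrightarrow> (\<forall>t\<in>{-1..<0}. \<forall>r\<ge>0. \<bar>\<phi> t r\<bar> \<le> c)"
proof -
  have "\<forall>x. g differentiable (at x)"
    using assms(2) unfolding target_warp_def by (metis funpow_0)
  hence cg: "continuous_on UNIV g"
    by (simp add: continuous_at_imp_continuous_on differentiable_imp_continuous_within)
  have "eventually (\<lambda>x. 1 / \<kappa> + 1 \<le> wp g x) at_top"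
    using assms(3) by (simp add: filterlim_at_top)
  then obtain N where N: "\<And>x. x \<ge> N \<Longrightarrow> 1 / \<kappa> + 1 \<le> wp g x"
    by (auto simp: eventually_at_top_linorder)
  show ?thesis
  proof (intro exI[of _ "max N 0"] allI impI ballI)
    fix \<alpha> \<beta> \<phi> :: "real \<Rightarrow> real \<Rightarrow> real" and t r :: real
    assume H: "EWM_solution \<kappa> g \<alpha> \<beta> \<phi> \<and> (\<forall>r\<ge>0. \<phi> (-1) r = \<phi>0 r) \<and>
           (\<forall>r>0. pt \<phi> (-1) r = \<phi>1 r)" and t: "t \<in> {-1..<0}" and r: "r \<ge> (0::real)"
    have w: "wp g (\<phi> t r) \<le> 1 / \<kappa>" using key[OF assms(1) cg _ t r] H by blast
    have nn: "\<phi> t r \<ge> 0" using H t r unfolding EWM_solution_def by blast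
    have "\<phi> t r < N \<or> \<phi> t r \<le> N"
    proof (rule ccontr)
      assume "\<not> ?thesis" hence "\<phi> t r \<ge> N" by auto
      from N[OF this] w show False by simp
    qed
    thus "\<bar>\<phi> t r\<bar> \<le> max N 0" using nn by auto
  qed
qed

end
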